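(* Let $N,L,M\ge1$, $\mathbf{y}^{(1)},\dots,\mathbf{y}^{(L)}\in\mathbb{C}^M$, $\mu_1,\dots,\mu_N\in\mathbb{R}$, $\sigma_1,\dots,\sigma_N>0$, and $c=\exp(2\pi j/(N+1))$. For each slot $i=1,\dots,L$ consider latent variables $T^{(i)}\in\{0,\dots,N\}$ and $\boldsymbol\theta^{(i)}\in(0,1)^N$ with joint density $$p(\mathbf{y}^{(i)},T^{(i)}=m,\boldsymbol\theta^{(i)}\mid\boldsymbol\Phi)=\frac{1}{[2\pi\Sigma_m]^M}\exp\left(-\frac{\|\mathbf{y}^{(i)}\|_2^2}{2\Sigma_m}\right)P(m\mid\boldsymbol\theta^{(i)})\,p(\boldsymbol\theta^{(i)}\mid\mathbf{x}),\qquad \Sigma_m=\sigma_h^2m+\sigma_w^2,$$ where $P(m\mid\boldsymbol\theta)=\frac{1}{N+1}\sum_{\ell=0}^Nc^{-\ell m}\prod_{k=1}^N[1+(c^\ell-1)\theta_k]$ and $$p(\boldsymbol\theta\mid\mathbf{x})=\left(\prod_{n=1}^N\frac{\sigma_n}{\theta_n-\theta_n^2}\right)\frac{1}{(2\pi)^{N/2}\delta^N}\exp\left(-\frac{\sum_{n=1}^N\left(-\sigma_n\log\left(\frac{1}{\theta_n}-1\right)+\mu_n-x_n\right)^2}{2\delta^2}\right).$$ Let $q(T^{(i)})$ be probability mass functions on $\{0,\dots,N\}$ and $q(\theta^{(i)}_n)$ probability densities on $(0,1)$, and let the variational M-step maximize $\sum_{i=1}^L\mathbb{E}_q\left[\log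 p(\mathbf{y}^{(i)},T^{(i)},\boldsymbol\theta^{(i)}\mid\boldsymbol\Phi)\right]$, expectation over $q(T^{(i)})\prod_nq(\theta^{(i)}_n)$, with the dependence on $(\sigma_h^2,\sigma_w^2)$ relaxed to independent variables $\Sigma_0,\dots,\Sigma_N>0$. Assume that for each $m$, $\sum_iq(T^{(i)}=m)\|\mathbf{y}^{(i)}\|_2^2>0$. Then the parameters $\{\mathbf{x},\delta^2,\sigma_h^2,\sigma_w^2\}$ are updated as: $$x_n^*=\mu_n-\frac1L\sum_{i=1}^L\int_0^1q(\theta^{(i)}_n)\,\sigma_n\log\left(\frac{1}{\theta^{(i)}_n}-1\right)d\theta^{(i)}_n,\qquad n=1,\dots,N,$$ $${\delta^2}^*=\frac{1}{LN}\sum_{i=1}^L\sum_{n=1}^N\int_0^1q(\theta^{(i)}_n)\left(-\sigma_n\log\left(\frac{1}{\theta^{(i)}_n}-1\right)+\mu_n-x_n\right)^2d\theta^{(i)}_n,$$ $$\Sigma_m^*=\frac{\sum_{i=1}^Lq(T^{(i)}=m)\|\mathbf{y}^{(i)}\|_2^2}{2M\sum_{i=1}^Lq(T^{(i)}=m)},\qquad m=0,\dots,N,$$ $$(\sigma_h^{2*},\sigma_w^{2*})=\left(\frac{\sum_{m=0}^N(m-\frac N2)(\Sigma_m^*-\bar\Sigma)}{\sum_{m=0}^N(m-\frac N2)^2},\ \bar\Sigma-\frac N2\sigma_h^{2*}\right),$$ where $\bar\Sigma=\frac{1}{N+1}\sum_{m=0}^N\Sigma_m^*$; here $x^*$, ${\delta^2}^*$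 (with $x_n=x_n^*$) and $\Sigma_m^*$ maximize the variational M-step objective, and $(\sigma_h^{2*},\sigma_w^{2*})$ is the least-squares fit of $\Sigma_m^*\approx\sigma_w^2+m\sigma_h^2$.
   Context: $\boldsymbol\Phi=\{\mathbf{x},\delta^2,\sigma_h^2,\sigma_w^2\}$ is the parameter set, with $\mathbf{x}\in\mathbb{R}^N$, $\delta^2,\sigma_h^2,\sigma_w^2>0$. The expectations/integrals involved are assumed finite. *)

theory Defs
  imports "HOL-Probability.Probability"
begin

definition croot :: "nat \<Rightarrow> complex" where
  "croot N = exp (2 * of_real pi * \<i> / of_nat (N + 1))"

text \<open>P(m | theta) = 1/(N+1) sum_l c^(-l m) prod_k [1 + (c^l - 1) theta_k]
  (a real number; we take the real part of the complex expression).\<close>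
definition PT :: "nat \<Rightarrow> nat \<Rightarrow> (nat \<Rightarrow> real) \<Rightarrow> real" where
  "PT N m \<theta> = Re ((1 / of_nat (N + 1)) *
     (\<Sum>l = 0..N. inverse (croot N) ^ (l * m) *
        (\<Prod>k = 1..N. 1 + (croot N ^ l - 1) * of_real (\<theta> k))))"

definition ptheta :: "nat \<Rightarrow> (nat \<Rightarrow> real) \<Rightarrow> (nat \<Rightarrow> real) \<Rightarrow> (nat \<Rightarrow> real)
     \<Rightarrow> real \<Rightarrow> (nat \<Rightarrow> real) \<Rightarrow> real" where
  "ptheta N \<sigma> \<mu> x \<delta>2 \<theta> =
     (\<Prod>n = 1..N. \<sigma> n / (\<theta> n - (\<theta> n)\<^sup>2)) *
     (1 / ((2 * pi) powr (real N / 2) * sqrt \<delta>2 ^ N)) *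
     exp (- (\<Sum>n = 1..N. (- \<sigma> n * ln (1 / \<theta> n - 1) + \<mu> n - x n)\<^sup>2) / (2 * \<delta>2))"

text \<open>Log of the joint density p(y, T = m, theta | Phi), with Sigma_m relaxed to
  independent variables \<Sigma> m; M = CARD('m).\<close>
definition logjoint :: "nat \<Rightarrow> (nat \<Rightarrow> real) \<Rightarrow> (nat \<Rightarrow> real) \<Rightarrow> complex ^ 'm
     \<Rightarrow> nat \<Rightarrow> (nat \<Rightarrow> real) \<Rightarrow> (nat \<Rightarrow> real) \<Rightarrow> real \<Rightarrow> (nat \<Rightarrow> real) \<Rightarrow> real" where
  "logjoint N \<sigma> \<mu> y m \<theta> x \<delta>2 \<Sigma> =
     ln (1 / (2 * pi * \<Sigma> m) ^ CARD('m) * exp (- (norm y)\<^sup>2 / (2 * \<Sigma> m))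
         * PT N m \<theta> * ptheta N \<sigma> \<mu> x \<delta>2 \<theta>)"

definition Qtheta :: "nat \<Rightarrow> (nat \<Rightarrow> real \<Rightarrow> real) \<Rightarrow> (nat \<Rightarrow> real) measure" where
  "Qtheta N q = PiM {1..N} (\<lambda>n. density lborel (\<lambda>t. ennreal (indicator {0<..<1} t * q n t)))"

definition Mobj :: "nat \<Rightarrow> nat \<Rightarrow> (nat \<Rightarrow> real) \<Rightarrow> (nat \<Rightarrow> real) \<Rightarrow> (nat \<Rightarrow> complex ^ 'm)
     \<Rightarrow> (nat \<Rightarrow> nat \<Rightarrow> real) \<Rightarrow> (nat \<Rightarrow> nat \<Rightarrow> real \<Rightarrow> real)
     \<Rightarrow> (nat \<Rightarrow> real) \<Rightarrow> real \<Rightarrow> (nat \<Rightarrow> real) \<Rightarrow> real" where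
  "Mobj N L \<sigma> \<mu> y qT q x \<delta>2 \<Sigma> =
     (\<Sum>i = 1..L. \<Sum>m = 0..N. qT i m *
        (\<integral>\<theta>. logjoint N \<sigma> \<mu> (y i) m \<theta> x \<delta>2 \<Sigma> \<partial>Qtheta N (q i)))"

end

theory Submission
  imports Defs "HOL-Computational_Algebra.Polynomial"
begin
definition Ppoly :: "(nat \<Rightarrow> real) \<Rightarrow> nat set \<Rightarrow> complex poly" where
  "Ppoly \<theta> S = (\<Prod>k\<in>S. [:1 - complex_of_real (\<theta> k), complex_of_real (\<theta> k):])"

lemma Ppoly_coeff:
  assumes "finite S" "\<forall>k\<in>S. 0 < \<theta> k \<and> \<theta> k < 1"
  shows "\<forall>m. Im (coeff (Ppoly \<theta> S) m) = 0 \<and> Re (coeff (Ppoly \<theta> S) m) \<ge> 0 \<and>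
     (m \<le> card S \<longrightarrow> Re (coeff (Ppoly \<theta> S) m) > 0) \<and> (m > card S \<longrightarrow> coeff (Ppoly \<theta> S) m = 0)"
  using assms
proof (induction S rule: finite_induct)
  case empty
  then show ?case by (auto simp: Ppoly_def)
next
  case (insert k S)
  have th: "0 < \<theta> k" "\<theta> k < 1" using insert.prems by auto
  have IH: "\<forall>m. Im (coeff (Ppoly \<theta> S) m) = 0 \<and> Re (coeff (Ppoly \<theta> S) m) \<ge> 0 \<and>
     (m \<le> card S \<longrightarrow> Re (coeff (Ppoly \<theta> S) m) > 0) \<and> (m > card S \<longrightarrow> coeff (Ppoly \<theta> S) m = 0)"
    using insert by auto
  have eq: "Ppoly \<theta> (insert k S) = smult (1 - complex_of_real (\<theta> k)) (Ppoly \<theta> S)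
       + pCons 0 (smult (complex_of_real (\<theta> k)) (Ppoly \<theta> S))"
    using insert.hyps by (simp add: Ppoly_def mult.commute)
  show ?case
  proof (intro allI)
    fix m
    have c: "coeff (Ppoly \<theta> (insert k S)) m = (1 - complex_of_real (\<theta> k)) * coeff (Ppoly \<theta> S) m
       + (if m = 0 then 0 else complex_of_real (\<theta> k) * coeff (Ppoly \<theta> S) (m - 1))"
      unfolding eq by (simp add: coeff_pCons')
    have cs: "card (insert k S) = Suc (card S)" using insert.hyps by simp
    have A: "Re ((1 - complex_of_real (\<theta> k)) * coeff (Ppoly \<theta> S) m) = (1 - \<theta> k) * Re (coeff (Ppoly \<theta> S) m)"
      using IH by simp
    have B: "Re (complex_of_real (\<theta> k) * coeff (Ppoly \<theta> S) (m-1)) = \<theta> k * Re (coeff (Ppoly \<theta> S) (m-1))"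
      by simp
    have n1: "Re (coeff (Ppoly \<theta> S) m) \<ge> 0" "Re (coeff (Ppoly \<theta> S) (m-1)) \<ge> 0" using IH by auto
    show "Im (coeff (Ppoly \<theta> (insert k S)) m) = 0 \<and> Re (coeff (Ppoly \<theta> (insert k S)) m) \<ge> 0 \<and>
     (m \<le> card (insert k S) \<longrightarrow> Re (coeff (Ppoly \<theta> (insert k S)) m) > 0) \<and>
     (m > card (insert k S) \<longrightarrow> coeff (Ppoly \<theta> (insert k S)) m = 0)"
    proof (intro conjI impI)
      show "Im (coeff (Ppoly \<theta> (insert k S)) m) = 0" using IH unfolding c by simp
      show "Re (coeff (Ppoly \<theta> (insert k S)) m) \<ge> 0" unfolding c using n1 th
        by (simp add: A)
      show "Re (coeff (Ppoly \<theta> (insert k S)) m) > 0" if "m \<le> card (insert k S)"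
      proof (cases "m \<le> card S")
        case True
        then have "Re (coeff (Ppoly \<theta> S) m) > 0" using IH by auto
        then show ?thesis unfolding c using n1 th
          by (simp add: A) (smt (verit) mult_nonneg_nonneg mult_pos_pos)
      next
        case False
        then have m: "m = Suc (card S)" using that cs by auto
        then have "Re (coeff (Ppoly \<theta> S) (m-1)) > 0" using IH by auto
        moreover have "coeff (Ppoly \<theta> S) m = 0" using IH m by auto
        ultimately show ?thesis unfolding c using th m by simp
      qed
      show "coeff (Ppoly \<theta> (insert k S)) m = 0" if "m > card (insert k S)"
        using IH that cs unfolding c by auto
    qed
  qed
qed

lemma croot_pow_sum:
  assumes "j \<le> N" "m \<le> N"
  shows "(\<Sum>l = 0..N. inverse (croot N) ^ (l * m) * (croot N ^ l) ^ j) = (if j = m then of_nat (N+1) else 0)"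
proof -
  define w where "w = exp (2 * of_real pi * \<i> * (of_int (int j - int m)) / of_nat (N + 1))"
  have cpow: "croot N ^ a = exp (of_nat a * (2 * of_real pi * \<i> / of_nat (N + 1)))" for a
    unfolding croot_def by (rule exp_of_nat_mult[symmetric])
  have tm: "inverse (croot N) ^ (l * m) * (croot N ^ l) ^ j = w ^ l" for l
  proof -
    have "inverse (croot N) ^ (l * m) * (croot N ^ l) ^ j = croot N ^ (l*j) / croot N ^ (l*m)"
      by (simp add: power_mult[symmetric] power_inverse divide_inverse mult.commute)
    also have "\<dots> = exp (of_nat (l*j) * (2 * of_real pi * \<i> / of_nat (N + 1)) - of_nat (l*m) * (2 * of_real pi * \<i> / of_nat (N + 1)))"
      by (simp add: cpow exp_diff)
    also have "\<dots> = exp (of_nat l * (2 * of_real pi * \<i> * (of_int (int j - int m)) / of_nat (N + 1)))"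
      by (rule arg_cong[where f=exp]) (simp add: algebra_simps diff_divide_distrib)
    also have "\<dots> = w ^ l" unfolding w_def by (rule exp_of_nat_mult)
    finally show ?thesis .
  qed
  have sw: "(\<Sum>l = 0..N. inverse (croot N) ^ (l * m) * (croot N ^ l) ^ j) = (\<Sum>l = 0..N. w ^ l)"
    by (simp only: tm)
  have sum: "(\<Sum>l = 0..N. w ^ l) = (\<Sum>l<N+1. w ^ l)"
    by (rule sum.cong) auto
  show ?thesis
  proof (cases "j = m")
    case True
    then have "w = 1" unfolding w_def by simp
    then show ?thesis unfolding sw using True by simp
  next
    case False
    have wN: "w ^ (N+1) = 1"
    proof -
      have "w ^ (N+1) = exp (of_nat (N+1) * (2 * of_real pi * \<i> * (of_int (int j - int m)) / of_nat (N + 1)))"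
        unfolding w_def by (rule exp_of_nat_mult[symmetric])
      also have "\<dots> = exp (2 * of_real pi * \<i> * of_int (int j - int m))"
      proof (rule arg_cong[where f=exp])
        have "(of_nat (N+1) :: complex) \<noteq> 0" by (simp del: of_nat_Suc)
        then show "of_nat (N+1) * (2 * of_real pi * \<i> * (of_int (int j - int m)) / of_nat (N + 1)) =
           (2 * of_real pi * \<i> * of_int (int j - int m) :: complex)"
          by (simp only: times_divide_eq_right) (rule nonzero_mult_div_cancel_left)
      qed
      also have "\<dots> = 1" by (simp add: exp_eq_1) (rule exI[of _ "int j - int m"], simp)
      finally show ?thesis .
    qed
    have w1: "w \<noteq> 1"
    proof
      assume "w = 1"
      then obtain n :: int where n: "Im (2 * of_real pi * \<i> * (of_int (int j - int m)) / of_nat (N + 1)) = of_int (2 * n) * pi"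
        unfolding w_def exp_eq_1 by blast
      have "2 * pi * real_of_int (int j - int m) / real (N+1) = 2 * real_of_int n * pi"
        using n by (simp only: Im_divide_of_nat) simp
      then have "(2*pi) * (real_of_int (int j - int m) / real (N+1)) = (2*pi) * real_of_int n"
        by (simp add: algebra_simps)
      then have "real_of_int (int j - int m) / real (N+1) = real_of_int n"
        using pi_gt_zero by (metis mult_cancel_left mult_eq_0_iff pi_neq_zero zero_neq_numeral)
      then have "real_of_int (int j - int m) = real_of_int n * real (N+1)"
        by (simp add: divide_eq_eq del: of_nat_Suc)
      then have eqn: "int j - int m = n * int (N+1)" by (metis of_int_eq_iff of_int_mult of_int_of_nat_eq)
      moreover have "\<bar>int j - int m\<bar> < int (N+1)" using assms by simp
      ultimately have "\<bar>n * int (N+1)\<bar> < int (N+1)" by simp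
      then have "\<bar>n\<bar> * int (N+1) < 1 * int (N+1)" by (simp add: abs_mult)
      then have "\<bar>n\<bar> < 1" by (rule mult_right_less_imp_less) simp
      then have "n = 0" by simp
      then show False using False eqn by simp
    qed
    show ?thesis unfolding sw sum using False by (simp only: sum_gp_strict if_not_P[OF w1] wN) simp
  qed
qed


lemma PT_pos:
  assumes "m \<le> N" "\<forall>k\<in>{1..N}. 0 < \<theta> k \<and> \<theta> k < 1"
  shows "PT N m \<theta> > 0"
proof -
  let ?P = "Ppoly \<theta> {1..N}"
  have co: "\<forall>m. Im (coeff ?P m) = 0 \<and> Re (coeff ?P m) \<ge> 0 \<and>
     (m \<le> N \<longrightarrow> Re (coeff ?P m) > 0) \<and> (m > N \<longrightarrow> coeff ?P m = 0)"
    using Ppoly_coeff[of "{1..N}" \<theta>] assms by simp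
  have deg: "degree ?P \<le> N" using co by (intro degree_le) auto
  have prodeq: "(\<Prod>k = 1..N. 1 + (z - 1) * of_real (\<theta> k)) = (\<Sum>j\<le>N. coeff ?P j * z ^ j)" for z
  proof -
    have "(\<Prod>k = 1..N. 1 + (z - 1) * of_real (\<theta> k)) = poly ?P z"
      unfolding Ppoly_def poly_prod by (intro prod.cong) (auto simp: algebra_simps)
    also have "\<dots> = poly (\<Sum>i\<le>N. monom (coeff ?P i) i) z"
      using poly_as_sum_of_monoms'[OF deg] by simp
    also have "\<dots> = (\<Sum>j\<le>N. coeff ?P j * z ^ j)" by (simp add: poly_sum poly_monom)
    finally show ?thesis .
  qed
  have "(\<Sum>l = 0..N. inverse (croot N) ^ (l * m) *
        (\<Prod>k = 1..N. 1 + (croot N ^ l - 1) * of_real (\<theta> k)))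
      = (\<Sum>l = 0..N. \<Sum>j\<le>N. coeff ?P j * (inverse (croot N) ^ (l * m) * (croot N ^ l) ^ j))"
    by (intro sum.cong refl) (simp only: prodeq sum_distrib_left mult.left_commute)
  also have "\<dots> = (\<Sum>j\<le>N. coeff ?P j * (\<Sum>l = 0..N. inverse (croot N) ^ (l * m) * (croot N ^ l) ^ j))"
    by (subst sum.swap) (simp add: sum_distrib_left)
  also have "\<dots> = (\<Sum>j\<le>N. coeff ?P j * (if j = m then of_nat (N+1) else 0))"
    using assms(1) by (intro sum.cong refl) (simp add: croot_pow_sum del: of_nat_Suc)
  also have "\<dots> = coeff ?P m * of_nat (N+1)"
    using assms(1) by (simp add: if_distrib sum.delta cong: if_cong del: of_nat_Suc)
  finally have "PT N m \<theta> = Re ((1 / of_nat (N + 1)) * (coeff ?P m * of_nat (N+1)))"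
    unfolding PT_def by simp
  also have "\<dots> = Re (coeff ?P m)" by (simp del: of_nat_Suc)
  finally show ?thesis using co assms(1) by simp
qed

definition Dn :: "(real \<Rightarrow> real) \<Rightarrow> real measure" where
  "Dn f = density lborel (\<lambda>t. ennreal (indicator {0<..<1} t * f t))"

lemma ind_meas: assumes [measurable]: "(f::real\<Rightarrow>real) \<in> borel_measurable borel"
  shows "(\<lambda>t. indicator {0<..<1::real} t * f t) \<in> borel_measurable borel"
  by measurable
lemma ind_meas': assumes [measurable]: "(f::real\<Rightarrow>real) \<in> borel_measurable borel"
  shows "(\<lambda>t. ennreal (indicator {0<..<1::real} t * f t)) \<in> borel_measurable borel"
  by measurable
lemma ind_measL: assumes "(f::real\<Rightarrow>real) \<in> borel_measurable borel"
  shows "(\<lambda>t. ennreal (indicator {0<..<1::real} t * f t)) \<in> borel_measurable lborel"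
  using ind_meas'[OF assms] by simp

lemma Qtheta_Dn: "Qtheta N q = PiM {1..N} (\<lambda>n. Dn (q n))"
  unfolding Qtheta_def Dn_def ..

lemma Dn_prob:
  fixes f :: "real \<Rightarrow> real"
  assumes meas: "f \<in> borel_measurable borel" and nn: "\<forall>t\<in>{0<..<1}. f t \<ge> 0"
    and int: "set_integrable lborel {0<..<1::real} f" and one: "(LINT t:{0<..<1}|lborel. f t) = 1"
  shows "prob_space (Dn f)"
proof (rule prob_spaceI)
  have nn': "\<And>t. 0 \<le> indicator {0<..<1} t * f t" using nn by (auto simp: indicator_def)
  have int': "integrable lborel (\<lambda>t. indicator {0<..<1::real} t * f t)"
    using int unfolding set_integrable_def by simp
  have [measurable]: "f \<in> borel_measurable borel" by (rule meas)
  have "emeasure (Dn f) (space (Dn f)) = (\<integral>\<^sup>+ t. ennreal (indicator {0<..<1} t * f t) \<partial>lborel)"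
    unfolding Dn_def by (subst emeasure_density[OF ind_measL[OF meas]]) simp_all
  also have "\<dots> = ennreal (integral\<^sup>L lborel (\<lambda>t. indicator {0<..<1::real} t * f t))"
    using int' nn' by (intro nn_integral_eq_integral) (auto simp del: mult_nonneg_nonneg)
  also have "integral\<^sup>L lborel (\<lambda>t. indicator {0<..<1::real} t * f t) = 1"
    using one unfolding set_lebesgue_integral_def by simp
  finally show "emeasure (Dn f) (space (Dn f)) = 1" by simp
qed

locale slot =
  fixes N :: nat and q :: "nat \<Rightarrow> real \<Rightarrow> real"
  assumes q_meas: "\<forall>n\<in>{1..N}. q n \<in> borel_measurable borel"
    and q_nonneg: "\<forall>n\<in>{1..N}. \<forall>t\<in>{0<..<1}. q n t \<ge> 0"
    and q_int: "\<forall>n\<in>{1..N}. set_integrable lborel {0<..<1::real} (q n)"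
    and q_norm: "\<forall>n\<in>{1..N}. (LINT t:{0<..<1}|lborel. q n t) = 1"
begin

lemma Dn_prob': "n \<in> {1..N} \<Longrightarrow> prob_space (Dn (q n))"
  using q_meas q_nonneg q_int q_norm by (intro Dn_prob) auto

lemma Q_prob: "prob_space (Qtheta N q)"
  unfolding Qtheta_Dn by (rule prob_space_PiM) (rule Dn_prob')

lemma sets_Dn[simp]: "sets (Dn f) = sets borel"
  unfolding Dn_def by simp

lemma distr_comp: "n \<in> {1..N} \<Longrightarrow> distr (Qtheta N q) (Dn (q n)) (\<lambda>\<theta>. \<theta> n) = Dn (q n)"
  unfolding Qtheta_Dn by (rule distr_PiM_component) (auto intro: Dn_prob')

lemma comp_meas: "n \<in> {1..N} \<Longrightarrow> (\<lambda>\<theta>. \<theta> n) \<in> measurable (Qtheta N q) (Dn (q n))"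
  unfolding Qtheta_Dn by (rule measurable_component_singleton)

lemma marg_integrable:
  assumes n: "n \<in> {1..N}" and g: "g \<in> borel_measurable borel"
  shows "integrable (Qtheta N q) (\<lambda>\<theta>. g (\<theta> n)) \<longleftrightarrow> set_integrable lborel {0<..<1::real} (\<lambda>t. q n t * g t)"
proof -
  have [measurable]: "q n \<in> borel_measurable borel" "g \<in> borel_measurable borel" using q_meas n g by auto
  have nnq: "\<And>t. 0 \<le> indicator {0<..<1::real} t * q n t" using q_nonneg n by (auto simp: indicator_def)
  have gm: "g \<in> borel_measurable (Dn (q n))"
    unfolding measurable_cong_sets[OF sets_Dn refl] by (rule g)
  have "integrable (Qtheta N q) (\<lambda>\<theta>. g (\<theta> n)) \<longleftrightarrow> integrable (Dn (q n)) g"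
    using integrable_distr_eq[OF comp_meas[OF n] gm] distr_comp[OF n] by simp
  also have "\<dots> \<longleftrightarrow> integrable lborel (\<lambda>t. (indicator {0<..<1} t * q n t) *\<^sub>R g t)"
    unfolding Dn_def by (rule integrable_density) (simp_all add: ind_meas nnq)
  also have "\<dots> \<longleftrightarrow> set_integrable lborel {0<..<1::real} (\<lambda>t. q n t * g t)"
    unfolding set_integrable_def by (simp add: mult.assoc)
  finally show ?thesis .
qed

lemma marg_integral:
  assumes n: "n \<in> {1..N}" and g: "g \<in> borel_measurable borel"
  shows "(\<integral>\<theta>. g (\<theta> n) \<partial>Qtheta N q) = (LINT t:{0<..<1}|lborel. q n t * g t)"
proof -
  have [measurable]: "q n \<in> borel_measurable borel" "g \<in> borel_measurable borel" using q_meas n g by auto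
  have nnq: "\<And>t. 0 \<le> indicator {0<..<1::real} t * q n t" using q_nonneg n by (auto simp: indicator_def)
  have gm: "g \<in> borel_measurable (Dn (q n))"
    unfolding measurable_cong_sets[OF sets_Dn refl] by (rule g)
  have "(\<integral>\<theta>. g (\<theta> n) \<partial>Qtheta N q) = integral\<^sup>L (Dn (q n)) g"
    using integral_distr[OF comp_meas[OF n] gm] distr_comp[OF n] by simp
  also have "\<dots> = integral\<^sup>L lborel (\<lambda>t. (indicator {0<..<1} t * q n t) *\<^sub>R g t)"
    unfolding Dn_def by (rule integral_density) (simp_all add: ind_meas nnq)
  also have "\<dots> = (LINT t:{0<..<1}|lborel. q n t * g t)"
    unfolding set_lebesgue_integral_def by (simp add: mult.assoc)
  finally show ?thesis .
qed

lemma AE_unit: "AE \<theta> in Qtheta N q. \<forall>n\<in>{1..N}. 0 < \<theta> n \<and> \<theta> n < 1"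
proof (intro eventually_ball_finite ballI)
  show "finite {1..N}" by simp
  fix n assume n: "n \<in> {1..N}"
  have qm[measurable]: "q n \<in> borel_measurable borel" using q_meas n by auto
  have "AE t in Dn (q n). 0 < t \<and> t < 1"
    unfolding Dn_def by (subst AE_density[OF ind_measL[OF qm]]) (auto simp: indicator_def)
  then show "AE \<theta> in Qtheta N q. 0 < \<theta> n \<and> \<theta> n < 1"
    unfolding Qtheta_Dn using n by (intro AE_PiM_component) (auto intro: Dn_prob')
qed

end

locale slot2 = slot +
  fixes \<sigma> \<mu> :: "nat \<Rightarrow> real"
  assumes \<sigma>_pos: "\<forall>n\<in>{1..N}. \<sigma> n > 0"
    and fin1: "\<forall>n\<in>{1..N}. set_integrable lborel {0<..<1::real} (\<lambda>t. q n t * ln (1 / t - 1))"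
    and fin2: "\<forall>n\<in>{1..N}. set_integrable lborel {0<..<1::real} (\<lambda>t. q n t * (ln (1 / t - 1))\<^sup>2)"
begin

definition IL where "IL n = (LINT t:{0<..<1}|lborel. q n t * ln (1 / t - 1))"
definition IL2 where "IL2 n = (LINT t:{0<..<1}|lborel. q n t * (ln (1 / t - 1))\<^sup>2)"
definition E where "E n c = (LINT t:{0<..<1}|lborel. q n t * (- \<sigma> n * ln (1 / t - 1) + \<mu> n - c)\<^sup>2)"

lemma sq_expand: "q n t * (- \<sigma> n * ln (1 / t - 1) + \<mu> n - c)\<^sup>2 =
   (\<sigma> n)\<^sup>2 * (q n t * (ln (1 / t - 1))\<^sup>2) - (2 * \<sigma> n * (\<mu> n - c)) * (q n t * ln (1 / t - 1))
   + (\<mu> n - c)\<^sup>2 * q n t"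
  by (simp add: power2_eq_square algebra_simps)

lemma E_integrable: "n \<in> {1..N} \<Longrightarrow>
   set_integrable lborel {0<..<1::real} (\<lambda>t. q n t * (- \<sigma> n * ln (1 / t - 1) + \<mu> n - c)\<^sup>2)"
  unfolding sq_expand using fin1 fin2 q_int
  by (intro set_integral_add set_integral_diff set_integrable_mult_right) auto

lemma E_expand: "n \<in> {1..N} \<Longrightarrow> E n c = (\<sigma> n)\<^sup>2 * IL2 n - 2 * \<sigma> n * (\<mu> n - c) * IL n + (\<mu> n - c)\<^sup>2"
  unfolding E_def sq_expand IL_def IL2_def using fin1 fin2 q_int q_norm
  by (subst set_integral_add set_integral_diff, (intro set_integral_add set_integral_diff set_integrable_mult_right; auto)+)
     (auto simp: set_integral_diff set_integral_add)

lemma E_nonneg: "n \<in> {1..N} \<Longrightarrow> E n c \<ge> 0"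
  unfolding E_def set_lebesgue_integral_def using q_nonneg
  by (intro Bochner_Integration.integral_nonneg) (auto simp: indicator_def)

lemma root_unique:
  assumes n: "n \<in> {1..N}" and t: "0 < t" "t < 1"
    and z: "- \<sigma> n * ln (1 / t - 1) + \<mu> n - c = 0"
  shows "t = 1 / (1 + exp ((\<mu> n - c) / \<sigma> n))"
proof -
  have sp: "\<sigma> n > 0" using \<sigma>_pos n by auto
  have "ln (1 / t - 1) = (\<mu> n - c) / \<sigma> n" using z sp by (simp add: field_simps)
  moreover have "1 / t - 1 > 0" using t by (simp add: field_simps)
  ultimately have "1 / t - 1 = exp ((\<mu> n - c) / \<sigma> n)" by (metis exp_ln)
  then have "1 / t = 1 + exp ((\<mu> n - c) / \<sigma> n)" by simp
  then have "t * (1 + exp ((\<mu> n - c) / \<sigma> n)) = 1" using t by (simp add: field_simps)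
  moreover have "1 + exp ((\<mu> n - c) / \<sigma> n) > 0" by (smt (verit) exp_gt_zero)
  ultimately show ?thesis by (simp add: eq_divide_eq)
qed

lemma E_pos: assumes n: "n \<in> {1..N}" shows "E n c > 0"
proof (rule ccontr)
  assume "\<not> E n c > 0"
  then have E0: "E n c = 0" using E_nonneg[OF n, of c] by simp
  define g where "g t = (- \<sigma> n * ln (1 / t - 1) + \<mu> n - c)\<^sup>2" for t
  define h where "h t = indicator {0<..<1::real} t * (q n t * g t)" for t
  have hint: "integrable lborel h"
    using E_integrable[OF n, of c] unfolding set_integrable_def h_def g_def by simp
  have hnn: "AE t in lborel. 0 \<le> h t"
    using q_nonneg n unfolding h_def g_def by (auto simp: indicator_def)
  have "integral\<^sup>L lborel h = 0" using E0 unfolding E_def set_lebesgue_integral_def h_def g_def by simp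
  then have "AE t in lborel. h t = 0" using integral_nonneg_eq_0_iff_AE[OF hint hnn] by simp
  then have ae: "AE t in lborel. indicator {0<..<1::real} t * q n t = 0"
    using AE_lborel_singleton[of "1 / (1 + exp ((\<mu> n - c) / \<sigma> n))"]
  proof eventually_elim
    case (elim t)
    show ?case
    proof (cases "0 < t \<and> t < 1")
      case True
      then have "g t \<noteq> 0" using root_unique[OF n, of t c] elim(2) unfolding g_def by auto
      then show ?thesis using elim(1) True unfolding h_def by (simp add: indicator_def)
    next
      case False
      then show ?thesis by (simp add: indicator_def)
    qed
  qed
  have "integral\<^sup>L lborel (\<lambda>t. indicator {0<..<1::real} t * q n t) = 0"
    by (rule integral_eq_zero_AE) (rule ae)
  then have "(LINT t:{0<..<1}|lborel. q n t) = 0" unfolding set_lebesgue_integral_def by simp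
  then show False using q_norm n by auto
qed

end


context slot2 begin

definition Kc :: "nat \<Rightarrow> nat \<Rightarrow> (nat \<Rightarrow> real) \<Rightarrow> real" where
  "Kc M m \<theta> = ln (PT N m \<theta>) + ln (\<Prod>n = 1..N. \<sigma> n / (\<theta> n - (\<theta> n)\<^sup>2))
     - real M * ln (2 * pi) - ln ((2 * pi) powr (real N / 2))"

definition Sq :: "(nat \<Rightarrow> real) \<Rightarrow> (nat \<Rightarrow> real) \<Rightarrow> real" where
  "Sq \<theta> x = (\<Sum>n = 1..N. (- \<sigma> n * ln (1 / \<theta> n - 1) + \<mu> n - x n)\<^sup>2)"

lemma decomp:
  fixes y :: "complex ^ 'm"
  assumes th: "\<forall>n\<in>{1..N}. 0 < \<theta> n \<and> \<theta> n < 1" and m: "m \<le> N" and d: "\<delta>2 > 0" and S: "\<Sigma> m > 0"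
  shows "logjoint N \<sigma> \<mu> y m \<theta> x \<delta>2 \<Sigma> = Kc CARD('m) m \<theta> - real CARD('m) * ln (\<Sigma> m)
     - (norm y)\<^sup>2 / (2 * \<Sigma> m) - real N / 2 * ln \<delta>2 - Sq \<theta> x / (2 * \<delta>2)"
proof -
  let ?M = "CARD('m)"
  define a where "a = 1 / (2 * pi * \<Sigma> m) ^ ?M"
  define e where "e = exp (- (norm y)\<^sup>2 / (2 * \<Sigma> m))"
  define P where "P = PT N m \<theta>"
  define Pr where "Pr = (\<Prod>n = 1..N. \<sigma> n / (\<theta> n - (\<theta> n)\<^sup>2))"
  define A where "A = (2 * pi) powr (real N / 2)"
  define pt where "pt = ptheta N \<sigma> \<mu> x \<delta>2 \<theta>"
  have Pp: "P > 0" unfolding P_def using PT_pos m th by auto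
  have Prp: "Pr > 0" unfolding Pr_def
  proof (intro prod_pos ballI)
    fix n assume n: "n \<in> {1..N}"
    have "\<theta> n - (\<theta> n)\<^sup>2 > 0" using th n by (simp add: power2_eq_square)
    then show "0 < \<sigma> n / (\<theta> n - (\<theta> n)\<^sup>2)" using \<sigma>_pos n by simp
  qed
  have Ap: "A > 0" unfolding A_def by simp
  have ap: "a > 0" unfolding a_def using S by simp
  have ep: "e > 0" unfolding e_def by simp
  have sp: "sqrt \<delta>2 ^ N > 0" using d by simp
  have pt_eq: "pt = Pr * (1 / (A * sqrt \<delta>2 ^ N)) * exp (- Sq \<theta> x / (2 * \<delta>2))"
    unfolding pt_def ptheta_def Pr_def A_def Sq_def by simp
  have lm: "\<And>u v::real. u > 0 \<Longrightarrow> v > 0 \<Longrightarrow> ln (u * v) = ln u + ln v" by (simp add: ln_mult)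
  have lnpt: "ln pt = ln Pr - ln A - real N * (ln \<delta>2 / 2) - Sq \<theta> x / (2 * \<delta>2)"
  proof -
    have "ln pt = ln Pr + ln (1 / (A * sqrt \<delta>2 ^ N)) + ln (exp (- Sq \<theta> x / (2 * \<delta>2)))"
      unfolding pt_eq using Prp Ap sp
      by (subst lm, (simp_all add: mult_pos_pos)[2], subst lm, simp_all)
    also have "ln (1 / (A * sqrt \<delta>2 ^ N)) = - ln A - real N * (ln \<delta>2 / 2)"
      using Ap sp d by (simp add: ln_div ln_mult ln_realpow ln_sqrt)
    finally show ?thesis by simp
  qed
  have lna: "ln a = - (real ?M * (ln (2 * pi) + ln (\<Sigma> m)))"
    unfolding a_def using S by (simp add: ln_div ln_realpow ln_mult)
  have "logjoint N \<sigma> \<mu> y m \<theta> x \<delta>2 \<Sigma> = ln (a * e * P * pt)"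
    unfolding logjoint_def a_def e_def P_def pt_def ..
  also have "\<dots> = ln a + ln e + ln P + ln pt"
  proof -
    have ptp: "pt > 0" unfolding pt_eq using Prp Ap sp by simp
    show ?thesis using ap ep Pp ptp
      by (subst lm, simp_all add: mult_pos_pos, subst lm, simp_all add: mult_pos_pos, subst lm, simp_all)
  qed
  finally show ?thesis
    unfolding lnpt lna Kc_def P_def[symmetric] Pr_def[symmetric] A_def[symmetric] e_def
    by (simp add: algebra_simps)
qed

end

context slot2 begin

lemma g_meas: "(\<lambda>t::real. (- \<sigma> n * ln (1 / t - 1) + \<mu> n - c)\<^sup>2) \<in> borel_measurable borel"
  by measurable

lemma Sq_int:
  shows "integrable (Qtheta N q) (\<lambda>\<theta>. Sq \<theta> x)"
    and "(\<integral>\<theta>. Sq \<theta> x \<partial>Qtheta N q) = (\<Sum>n = 1..N. E n (x n))"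
proof -
  have i: "integrable (Qtheta N q) (\<lambda>\<theta>. (- \<sigma> n * ln (1 / \<theta> n - 1) + \<mu> n - x n)\<^sup>2)" if n: "n \<in> {1..N}" for n
    using marg_integrable[OF n g_meas[of n "x n"]] E_integrable[OF n, of "x n"] by simp
  show "integrable (Qtheta N q) (\<lambda>\<theta>. Sq \<theta> x)"
    unfolding Sq_def by (rule Bochner_Integration.integrable_sum) (rule i)
  have "(\<integral>\<theta>. Sq \<theta> x \<partial>Qtheta N q) = (\<Sum>n = 1..N. \<integral>\<theta>. (- \<sigma> n * ln (1 / \<theta> n - 1) + \<mu> n - x n)\<^sup>2 \<partial>Qtheta N q)"
    unfolding Sq_def by (rule Bochner_Integration.integral_sum) (rule i)
  also have "\<dots> = (\<Sum>n = 1..N. E n (x n))"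
    unfolding E_def by (intro sum.cong refl marg_integral[OF _ g_meas])
  finally show "(\<integral>\<theta>. Sq \<theta> x \<partial>Qtheta N q) = (\<Sum>n = 1..N. E n (x n))" .
qed

definition Hfun :: "nat \<Rightarrow> real \<Rightarrow> nat \<Rightarrow> (nat \<Rightarrow> real) \<Rightarrow> real \<Rightarrow> (nat \<Rightarrow> real) \<Rightarrow> (nat \<Rightarrow> real) \<Rightarrow> real" where
  "Hfun M Y m x \<delta>2 \<Sigma> \<theta> = - real M * ln (\<Sigma> m) - Y / (2 * \<Sigma> m) - real N / 2 * ln \<delta>2 - Sq \<theta> x / (2 * \<delta>2)"

definition Hval :: "nat \<Rightarrow> real \<Rightarrow> nat \<Rightarrow> (nat \<Rightarrow> real) \<Rightarrow> real \<Rightarrow> (nat \<Rightarrow> real) \<Rightarrow> real" where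
  "Hval M Y m x \<delta>2 \<Sigma> = - real M * ln (\<Sigma> m) - Y / (2 * \<Sigma> m) - real N / 2 * ln \<delta>2 - (\<Sum>n = 1..N. E n (x n)) / (2 * \<delta>2)"

lemma H_int:
  shows "integrable (Qtheta N q) (Hfun M Y m x \<delta>2 \<Sigma>)"
    and "integral\<^sup>L (Qtheta N q) (Hfun M Y m x \<delta>2 \<Sigma>) = Hval M Y m x \<delta>2 \<Sigma>"
proof -
  interpret Q: prob_space "Qtheta N q" by (rule Q_prob)
  have eq: "Hfun M Y m x \<delta>2 \<Sigma> = (\<lambda>\<theta>. (- real M * ln (\<Sigma> m) - Y / (2 * \<Sigma> m) - real N / 2 * ln \<delta>2) - Sq \<theta> x / (2 * \<delta>2))"
    unfolding Hfun_def by auto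
  show "integrable (Qtheta N q) (Hfun M Y m x \<delta>2 \<Sigma>)"
    unfolding eq using Sq_int(1) by (intro Bochner_Integration.integrable_diff integrable_divide) auto
  show "integral\<^sup>L (Qtheta N q) (Hfun M Y m x \<delta>2 \<Sigma>) = Hval M Y m x \<delta>2 \<Sigma>"
    unfolding eq Hval_def using Sq_int[of x]
    by (subst Bochner_Integration.integral_diff) (auto simp: Q.prob_space)
qed

lemma diff_lemma:
  fixes y :: "complex ^ 'm"
  assumes m: "m \<le> N"
    and d: "\<delta>2 > 0" and S: "\<Sigma> m > 0" and d': "\<delta>2' > 0" and S': "\<Sigma>' m > 0"
    and I: "integrable (Qtheta N q) (\<lambda>\<theta>. logjoint N \<sigma> \<mu> y m \<theta> x \<delta>2 \<Sigma>)"
    and I': "integrable (Qtheta N q) (\<lambda>\<theta>. logjoint N \<sigma> \<mu> y m \<theta> x' \<delta>2' \<Sigma>')"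
  shows "(\<integral>\<theta>. logjoint N \<sigma> \<mu> y m \<theta> x \<delta>2 \<Sigma> \<partial>Qtheta N q) - (\<integral>\<theta>. logjoint N \<sigma> \<mu> y m \<theta> x' \<delta>2' \<Sigma>' \<partial>Qtheta N q)
     = Hval CARD('m) ((norm y)\<^sup>2) m x \<delta>2 \<Sigma> - Hval CARD('m) ((norm y)\<^sup>2) m x' \<delta>2' \<Sigma>'"
proof -
  let ?M = "CARD('m)" and ?Y = "(norm y)\<^sup>2"
  let ?f = "\<lambda>\<theta>. logjoint N \<sigma> \<mu> y m \<theta> x \<delta>2 \<Sigma> - Hfun ?M ?Y m x \<delta>2 \<Sigma> \<theta>"
  let ?g = "\<lambda>\<theta>. logjoint N \<sigma> \<mu> y m \<theta> x' \<delta>2' \<Sigma>' - Hfun ?M ?Y m x' \<delta>2' \<Sigma>' \<theta>"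
  have fi: "integrable (Qtheta N q) ?f" using I H_int(1) by (rule Bochner_Integration.integrable_diff)
  have gi: "integrable (Qtheta N q) ?g" using I' H_int(1) by (rule Bochner_Integration.integrable_diff)
  have ae: "AE \<theta> in Qtheta N q. ?f \<theta> = ?g \<theta>"
    using AE_unit
  proof eventually_elim
    case (elim \<theta>)
    have e1: "logjoint N \<sigma> \<mu> y m \<theta> x \<delta>2 \<Sigma> = Kc CARD('m) m \<theta> - real CARD('m) * ln (\<Sigma> m)
     - (norm y)\<^sup>2 / (2 * \<Sigma> m) - real N / 2 * ln \<delta>2 - Sq \<theta> x / (2 * \<delta>2)"
      by (rule decomp) (use elim m d S in auto)
    have e2: "logjoint N \<sigma> \<mu> y m \<theta> x' \<delta>2' \<Sigma>' = Kc CARD('m) m \<theta> - real CARD('m) * ln (\<Sigma>' m)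
     - (norm y)\<^sup>2 / (2 * \<Sigma>' m) - real N / 2 * ln \<delta>2' - Sq \<theta> x' / (2 * \<delta>2')"
      by (rule decomp) (use elim m d' S' in auto)
    show ?case using e1 e2 unfolding Hfun_def by simp
  qed
  have "integral\<^sup>L (Qtheta N q) ?f = integral\<^sup>L (Qtheta N q) ?g"
    by (rule integral_cong_AE) (use fi gi ae in auto)
  then show ?thesis using I I' H_int[of ?M ?Y m x \<delta>2 \<Sigma>] H_int[of ?M ?Y m x' \<delta>2' \<Sigma>']
    by (simp add: Bochner_Integration.integral_diff)
qed

end

lemma kl_ineq:
  fixes A B s :: real
  assumes A: "A > 0" and B: "B > 0" and s: "s > 0"
  shows "- A * ln s - B / s \<le> - A * ln (B / A) - B / (B / A)"
proof -
  define u where "u = B / (A * s)"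
  have u: "u > 0" unfolding u_def using A B s by simp
  have "ln u \<le> u - 1" using ln_le_minus_one u by simp
  moreover have "ln u = ln B - ln A - ln s" unfolding u_def using A B s
    by (simp add: ln_div ln_mult)
  ultimately have "A * (ln B - ln A - ln s) \<le> A * (B / (A * s) - 1)"
    unfolding u_def using A by (intro mult_left_mono) auto
  then have ineq: "A * (ln B - ln A - ln s) \<le> A * (B / (A * s) - 1)" .
  have "A * (B / (A * s) - 1) = B / s - A" using A s by (simp add: field_simps)
  moreover have "A * (ln B - ln A - ln s) = A * ln B - A * ln A - A * ln s" by (simp add: algebra_simps)
  ultimately have "A * ln B - A * ln A - A * ln s \<le> B / s - A" using ineq by linarith
  moreover have LL: "ln (B / A) = ln B - ln A" using A B by (simp add: ln_div)
  have "- A * ln (B / A) = - (A * ln B) + A * ln A" unfolding LL by (simp add: algebra_simps)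
  moreover have "B / (B / A) = A" using A B by simp
  moreover have "- A * ln s = - (A * ln s)" by simp
  ultimately show ?thesis by linarith
qed

lemma gauss_real: "(\<Sum>m = 0..N. real m) = real N * (real N + 1) / 2"
  by (induction N) (auto simp: field_simps)

lemma lsq:
  fixes S :: "nat \<Rightarrow> real" and N :: nat
  assumes N: "N \<ge> 1"
  defines "Sbar \<equiv> (1 / real (N + 1)) * (\<Sum>m = 0..N. S m)"
  defines "sh \<equiv> (\<Sum>m = 0..N. (real m - real N / 2) * (S m - Sbar)) / (\<Sum>m = 0..N. (real m - real N / 2)\<^sup>2)"
  defines "sw \<equiv> Sbar - real N / 2 * sh"
  shows "(\<Sum>m = 0..N. (S m - (b + real m * a))\<^sup>2) \<ge> (\<Sum>m = 0..N. (S m - (sw + real m * sh))\<^sup>2)"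
proof -
  define D where "D = (\<Sum>m = 0..N. (real m - real N / 2)\<^sup>2)"
  define r where "r m = S m - (sw + real m * sh)" for m
  have Dpos: "D > 0" unfolding D_def
    by (rule sum_pos2[of _ 0]) (use N in auto)
  have c0: "(\<Sum>m = 0..N. (real m - real N / 2)) = 0"
  proof -
    have "(\<Sum>m = 0..N. (real m - real N / 2)) = (\<Sum>m = 0..N. real m) - real (N+1) * (real N / 2)"
      by (simp add: sum_subtractf del: of_nat_Suc)
    then show ?thesis by (simp add: gauss_real field_simps)
  qed
  have s0: "(\<Sum>m = 0..N. (S m - Sbar)) = 0"
    unfolding Sbar_def by (simp add: sum_subtractf del: of_nat_Suc)
  have rr: "r m = (S m - Sbar) - (real m - real N / 2) * sh" for m
    unfolding r_def sw_def by (simp add: algebra_simps)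
  have r0: "(\<Sum>m = 0..N. r m) = 0"
  proof -
    have "(\<Sum>m = 0..N. r m) = (\<Sum>m = 0..N. (S m - Sbar)) - (\<Sum>m = 0..N. (real m - real N / 2) * sh)"
      unfolding rr by (rule sum_subtractf)
    also have "(\<Sum>m = 0..N. (real m - real N / 2) * sh) = (\<Sum>m = 0..N. (real m - real N / 2)) * sh"
      by (rule sum_distrib_right[symmetric])
    finally show ?thesis using c0 s0 by simp
  qed
  have r1: "(\<Sum>m = 0..N. (real m - real N / 2) * r m) = 0"
  proof -
    have "(\<Sum>m = 0..N. (real m - real N / 2) * r m) =
        (\<Sum>m = 0..N. (real m - real N / 2) * (S m - Sbar)) - sh * D"
    proof -
      have pw: "(real m - real N / 2) * r m = (real m - real N / 2) * (S m - Sbar) - sh * (real m - real N / 2)\<^sup>2" for m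
        unfolding rr by (simp add: power2_eq_square field_simps)
      show ?thesis unfolding pw D_def sum_subtractf sum_distrib_left ..
    qed
    also have "\<dots> = 0" unfolding sh_def D_def[symmetric] using Dpos by simp
    finally show ?thesis .
  qed
  define \<beta> where "\<beta> = sh - a"
  define \<alpha> where "\<alpha> = sw - b + real N / 2 * \<beta>"
  have pt: "(S m - (b + real m * a))\<^sup>2 = (r m)\<^sup>2 + 2 * \<alpha> * r m + 2 * \<beta> * ((real m - real N / 2) * r m)
      + (\<alpha> + (real m - real N / 2) * \<beta>)\<^sup>2" for m
    unfolding r_def \<alpha>_def \<beta>_def by (simp add: power2_eq_square field_simps)
  have "(\<Sum>m = 0..N. (S m - (b + real m * a))\<^sup>2) = (\<Sum>m = 0..N. (r m)\<^sup>2) + 2 * \<alpha> * (\<Sum>m = 0..N. r m)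
      + 2 * \<beta> * (\<Sum>m = 0..N. (real m - real N / 2) * r m) + (\<Sum>m = 0..N. (\<alpha> + (real m - real N / 2) * \<beta>)\<^sup>2)"
    unfolding pt by (simp add: sum.distrib sum_distrib_left)
  also have "\<dots> \<ge> (\<Sum>m = 0..N. (r m)\<^sup>2)"
    unfolding r0 r1 by (simp add: sum_nonneg)
  finally show ?thesis unfolding r_def by simp
qed

lemma quad_min:
  fixes L K d :: real
  assumes "L > 0"
  shows "- 2 * d * K + L * d\<^sup>2 \<ge> - 2 * (K / L) * K + L * (K / L)\<^sup>2"
proof -
  have "- 2 * d * K + L * d\<^sup>2 - (- 2 * (K / L) * K + L * (K / L)\<^sup>2) = (L * d - K)\<^sup>2 / L"
    using assms by (simp add: field_simps power2_eq_square)
  moreover have "(L * d - K)\<^sup>2 / L \<ge> 0" using assms by simp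
  ultimately show ?thesis by linarith
qed

theorem mainTheorem7:
  fixes N L :: nat
    and y :: "nat \<Rightarrow> complex ^ 'm"
    and \<mu> \<sigma> :: "nat \<Rightarrow> real"
    and qT :: "nat \<Rightarrow> nat \<Rightarrow> real"
    and q :: "nat \<Rightarrow> nat \<Rightarrow> real \<Rightarrow> real"
  assumes N: "N \<ge> 1" and L: "L \<ge> 1"
    and \<sigma>_pos: "\<forall>n\<in>{1..N}. \<sigma> n > 0"
    and qT_nonneg: "\<forall>i\<in>{1..L}. \<forall>m\<in>{0..N}. qT i m \<ge> 0"
    and qT_sum: "\<forall>i\<in>{1..L}. (\<Sum>m = 0..N. qT i m) = 1"
    and q_meas: "\<forall>i\<in>{1..L}. \<forall>n\<in>{1..N}. q i n \<in> borel_measurable borel"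
    and q_nonneg: "\<forall>i\<in>{1..L}. \<forall>n\<in>{1..N}. \<forall>t\<in>{0<..<1}. q i n t \<ge> 0"
    and q_int: "\<forall>i\<in>{1..L}. \<forall>n\<in>{1..N}. set_integrable lborel {0<..<1::real} (q i n)"
    and q_norm: "\<forall>i\<in>{1..L}. \<forall>n\<in>{1..N}. (LINT t:{0<..<1}|lborel. q i n t) = 1"
    and fin1: "\<forall>i\<in>{1..L}. \<forall>n\<in>{1..N}.
        set_integrable lborel {0<..<1::real} (\<lambda>t. q i n t * ln (1 / t - 1))"
    and fin2: "\<forall>i\<in>{1..L}. \<forall>n\<in>{1..N}.
        set_integrable lborel {0<..<1::real} (\<lambda>t. q i n t * (ln (1 / t - 1))\<^sup>2)"
    and fin_joint: "\<forall>i\<in>{1..L}. \<forall>m\<in>{0..N}. \<forall>x \<delta>2 \<Sigma>. \<delta>2 > 0 \<longrightarrow> (\<forall>k\<in>{0..N}. \<Sigma> k > 0) \<longrightarrow>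
        integrable (Qtheta N (q i)) (\<lambda>\<theta>. logjoint N \<sigma> \<mu> (y i) m \<theta> x \<delta>2 \<Sigma>)"
    and y_pos: "\<forall>m\<in>{0..N}. (\<Sum>i = 1..L. qT i m * (norm (y i))\<^sup>2) > 0"
  shows "let
      xs = (\<lambda>n. \<mu> n - (1 / real L) *
              (\<Sum>i = 1..L. LINT t:{0<..<1}|lborel. q i n t * \<sigma> n * ln (1 / t - 1)));
      \<delta>s = (1 / (real L * real N)) *
              (\<Sum>i = 1..L. \<Sum>n = 1..N. LINT t:{0<..<1}|lborel.
                 q i n t * (- \<sigma> n * ln (1 / t - 1) + \<mu> n - xs n)\<^sup>2);
      \<Sigma>s = (\<lambda>m. (\<Sum>i = 1..L. qT i m * (norm (y i))\<^sup>2) /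
              (2 * real CARD('m) * (\<Sum>i = 1..L. qT i m)));
      \<Sigma>bar = (1 / real (N + 1)) * (\<Sum>m = 0..N. \<Sigma>s m);
      sh = (\<Sum>m = 0..N. (real m - real N / 2) * (\<Sigma>s m - \<Sigma>bar)) /
           (\<Sum>m = 0..N. (real m - real N / 2)\<^sup>2);
      sw = \<Sigma>bar - real N / 2 * sh
    in \<delta>s > 0 \<and> (\<forall>m\<in>{0..N}. \<Sigma>s m > 0) \<and>
       (\<forall>x \<delta>2 \<Sigma>. \<delta>2 > 0 \<longrightarrow> (\<forall>m\<in>{0..N}. \<Sigma> m > 0) \<longrightarrow>
          Mobj N L \<sigma> \<mu> y qT q x \<delta>2 \<Sigma> \<le> Mobj N L \<sigma> \<mu> y qT q xs \<delta>s \<Sigma>s) \<and>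
       (\<forall>a b :: real. (\<Sum>m = 0..N. (\<Sigma>s m - (b + real m * a))\<^sup>2)
          \<ge> (\<Sum>m = 0..N. (\<Sigma>s m - (sw + real m * sh))\<^sup>2))"
proof -
  let ?M = "CARD('m)"
  define xs where "xs = (\<lambda>n. \<mu> n - (1 / real L) *
              (\<Sum>i = 1..L. LINT t:{0<..<1}|lborel. q i n t * \<sigma> n * ln (1 / t - 1)))"
  define \<delta>s where "\<delta>s = (1 / (real L * real N)) *
              (\<Sum>i = 1..L. \<Sum>n = 1..N. LINT t:{0<..<1}|lborel.
                 q i n t * (- \<sigma> n * ln (1 / t - 1) + \<mu> n - xs n)\<^sup>2)"
  define \<Sigma>s where "\<Sigma>s = (\<lambda>m. (\<Sum>i = 1..L. qT i m * (norm (y i))\<^sup>2) /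
              (2 * real CARD('m) * (\<Sum>i = 1..L. qT i m)))"
  define \<Sigma>bar where "\<Sigma>bar = (1 / real (N + 1)) * (\<Sum>m = 0..N. \<Sigma>s m)"
  define sh where "sh = (\<Sum>m = 0..N. (real m - real N / 2) * (\<Sigma>s m - \<Sigma>bar)) /
           (\<Sum>m = 0..N. (real m - real N / 2)\<^sup>2)"
  define sw where "sw = \<Sigma>bar - real N / 2 * sh"
  have SL: "slot2 N (q i) \<sigma>" if i: "i \<in> {1..L}" for i
    unfolding slot2_def slot2_axioms_def slot_def using i \<sigma>_pos q_meas q_nonneg q_int q_norm fin1 fin2
    by auto
  define EE where "EE i n c = slot2.E (q i) \<sigma> \<mu> n c" for i n c
  define W where "W m = (\<Sum>i = 1..L. qT i m)" for m
  define Ys where "Ys m = (\<Sum>i = 1..L. qT i m * (norm (y i))\<^sup>2)" for m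
  define T where "T i x = (\<Sum>n = 1..N. EE i n (x n))" for i x
  define Tt where "Tt x = (\<Sum>i = 1..L. T i x)" for x
  have L0: "real L > 0" using L by simp
  have Wpos: "W m > 0" if m: "m \<in> {0..N}" for m
  proof -
    have "W m \<ge> 0" unfolding W_def using qT_nonneg m by (intro sum_nonneg) auto
    moreover have "W m \<noteq> 0"
    proof
      assume "W m = 0"
      then have "\<forall>i\<in>{1..L}. qT i m = 0" unfolding W_def using qT_nonneg m
        by (subst (asm) sum_nonneg_eq_0_iff) auto
      then have "Ys m = 0" unfolding Ys_def by simp
      moreover have "Ys m > 0" using y_pos m unfolding Ys_def by auto
      ultimately show False by simp
    qed
    ultimately show ?thesis by simp
  qed
  have Yspos: "Ys m > 0" if "m \<in> {0..N}" for m using y_pos that unfolding Ys_def by simp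
  have \<Sigma>s_eq: "\<Sigma>s m = Ys m / (2 * real ?M * W m)" for m unfolding \<Sigma>s_def Ys_def W_def by simp
  have \<Sigma>s_pos: "\<forall>m\<in>{0..N}. \<Sigma>s m > 0"
    using Wpos Yspos unfolding \<Sigma>s_eq by (simp add: divide_pos_pos)
  have \<delta>s_eq: "\<delta>s = Tt xs / (real L * real N)"
  proof -
    have "(\<Sum>i = 1..L. \<Sum>n = 1..N. LINT t:{0<..<1}|lborel.
                 q i n t * (- \<sigma> n * ln (1 / t - 1) + \<mu> n - xs n)\<^sup>2) = Tt xs"
      unfolding Tt_def T_def EE_def
      by (intro sum.cong refl) (simp add: slot2.E_def[OF SL])
    then show ?thesis unfolding \<delta>s_def by simp
  qed
  have Tnn: "T i x \<ge> 0" if "i \<in> {1..L}" for i x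
    unfolding T_def EE_def using slot2.E_nonneg[OF SL[OF that]] by (intro sum_nonneg) auto
  have Ttpos: "Tt xs > 0"
  proof -
    have 1: "1 \<in> {1..L}" "1 \<in> {1..N}" using L N by auto
    have "T 1 xs > 0" unfolding T_def EE_def
      by (rule sum_pos2[of _ 1]) (use 1 slot2.E_pos[OF SL[OF 1(1)]] slot2.E_nonneg[OF SL[OF 1(1)]] in auto)
    then show ?thesis unfolding Tt_def
      by (intro sum_pos2[of _ 1]) (use 1 Tnn in auto)
  qed
  have \<delta>s_pos: "\<delta>s > 0" unfolding \<delta>s_eq using Ttpos L N by simp
  have xs_eq: "\<mu> n - xs n = (\<sigma> n * (\<Sum>i = 1..L. slot2.IL (q i) n)) / real L" for n
  proof -
    have "(\<Sum>i = 1..L. LINT t:{0<..<1}|lborel. q i n t * \<sigma> n * ln (1 / t - 1)) = (\<Sum>i = 1..L. \<sigma> n * slot2.IL (q i) n)"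
    proof (rule sum.cong[OF refl])
      fix i assume i: "i \<in> {1..L}"
      have "(LINT t:{0<..<1}|lborel. q i n t * \<sigma> n * ln (1 / t - 1)) =
            (LINT t:{0<..<1}|lborel. \<sigma> n * (q i n t * ln (1 / t - 1)))"
        by (simp add: mult.commute mult.left_commute)
      also have "\<dots> = \<sigma> n * slot2.IL (q i) n" unfolding slot2.IL_def[OF SL[OF i]] by (rule set_integral_mult_right)
      finally show "(LINT t:{0<..<1}|lborel. q i n t * \<sigma> n * ln (1 / t - 1)) = \<sigma> n * slot2.IL (q i) n" .
    qed
    then show ?thesis unfolding xs_def by (simp add: sum_distrib_left sum_divide_distrib)
  qed
  have Emin: "(\<Sum>i = 1..L. EE i n c) \<ge> (\<Sum>i = 1..L. EE i n (xs n))" if n: "n \<in> {1..N}" for n c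
  proof -
    define K where "K = \<sigma> n * (\<Sum>i = 1..L. slot2.IL (q i) n)"
    define C where "C = (\<Sum>i = 1..L. (\<sigma> n)\<^sup>2 * slot2.IL2 (q i) n)"
    have form: "(\<Sum>i = 1..L. EE i n c') = C - 2 * (\<mu> n - c') * K + real L * (\<mu> n - c')\<^sup>2" for c'
    proof -
      have "(\<Sum>i = 1..L. EE i n c') = (\<Sum>i = 1..L. (\<sigma> n)\<^sup>2 * slot2.IL2 (q i) n - 2 * \<sigma> n * (\<mu> n - c') * slot2.IL (q i) n + (\<mu> n - c')\<^sup>2)"
        unfolding EE_def by (intro sum.cong refl slot2.E_expand[OF SL n])
      also have "\<dots> = C - 2 * (\<mu> n - c') * K + real L * (\<mu> n - c')\<^sup>2"
        unfolding C_def K_def by (simp add: sum.distrib sum_subtractf sum_distrib_left algebra_simps)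
      finally show ?thesis .
    qed
    have q: "- 2 * (\<mu> n - c) * K + real L * (\<mu> n - c)\<^sup>2 \<ge> - 2 * (K / real L) * K + real L * (K / real L)\<^sup>2"
      by (rule quad_min[OF L0])
    have xk: "\<mu> n - xs n = K / real L" unfolding K_def by (rule xs_eq)
    have a: "(\<Sum>i = 1..L. EE i n c) = C + (- 2 * (\<mu> n - c) * K + real L * (\<mu> n - c)\<^sup>2)"
      using form[of c] by (simp add: algebra_simps)
    have b: "(\<Sum>i = 1..L. EE i n (xs n)) = C + (- 2 * (K / real L) * K + real L * (K / real L)\<^sup>2)"
      using form[of "xs n"] unfolding xk by (simp add: algebra_simps)
    show ?thesis unfolding a b using q by linarith
  qed
  have Ttmin: "Tt x \<ge> Tt xs" for x
  proof -
    have "Tt x = (\<Sum>n = 1..N. \<Sum>i = 1..L. EE i n (x n))" unfolding Tt_def T_def by (rule sum.swap)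
    also have "\<dots> \<ge> (\<Sum>n = 1..N. \<Sum>i = 1..L. EE i n (xs n))"
      by (intro sum_mono Emin) auto
    also have "(\<Sum>n = 1..N. \<Sum>i = 1..L. EE i n (xs n)) = Tt xs" unfolding Tt_def T_def by (rule sum.swap)
    finally show ?thesis .
  qed
  define G where "G x \<delta>2 \<Sigma> = (\<Sum>m = 0..N. - (real ?M * W m) * ln (\<Sigma> m) - Ys m / (2 * \<Sigma> m))
       + (- (real L * real N / 2) * ln \<delta>2 - Tt x / (2 * \<delta>2))" for x \<delta>2 and \<Sigma> :: "nat \<Rightarrow> real"
  define Hv where "Hv i m x \<delta>2 \<Sigma> = slot2.Hval N (q i) \<sigma> \<mu> ?M ((norm (y i))\<^sup>2) m x \<delta>2 \<Sigma>" for i m x \<delta>2 \<Sigma>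
  have Gsum: "(\<Sum>i = 1..L. \<Sum>m = 0..N. qT i m * Hv i m x \<delta>2 \<Sigma>) = G x \<delta>2 \<Sigma>" for x \<delta>2 \<Sigma>
  proof -
    have pw: "qT i m * Hv i m x \<delta>2 \<Sigma> = qT i m * (- real ?M * ln (\<Sigma> m)) - qT i m * (norm (y i))\<^sup>2 / (2 * \<Sigma> m)
       + qT i m * (- real N / 2 * ln \<delta>2 - T i x / (2 * \<delta>2))" if "i \<in> {1..L}" for i m
      unfolding Hv_def slot2.Hval_def[OF SL[OF that]] T_def EE_def by (simp add: algebra_simps)
    have A: "(\<Sum>i = 1..L. \<Sum>m = 0..N. qT i m * (- real ?M * ln (\<Sigma> m))) = (\<Sum>m = 0..N. - (real ?M * W m) * ln (\<Sigma> m))"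
      unfolding W_def by (subst sum.swap, intro sum.cong refl, subst sum_distrib_right[symmetric]) simp
    have B: "(\<Sum>i = 1..L. \<Sum>m = 0..N. qT i m * (norm (y i))\<^sup>2 / (2 * \<Sigma> m)) = (\<Sum>m = 0..N. Ys m / (2 * \<Sigma> m))"
      unfolding Ys_def by (subst sum.swap) (simp add: sum_divide_distrib)
    have C: "(\<Sum>i = 1..L. \<Sum>m = 0..N. qT i m * (- real N / 2 * ln \<delta>2 - T i x / (2 * \<delta>2)))
        = - (real L * real N / 2) * ln \<delta>2 - Tt x / (2 * \<delta>2)"
    proof -
      have "(\<Sum>i = 1..L. \<Sum>m = 0..N. qT i m * (- real N / 2 * ln \<delta>2 - T i x / (2 * \<delta>2)))
          = (\<Sum>i = 1..L. (- real N / 2 * ln \<delta>2 - T i x / (2 * \<delta>2)))"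
        using qT_sum by (intro sum.cong refl) (simp add: sum_distrib_right[symmetric])
      also have "\<dots> = - (real L * real N / 2) * ln \<delta>2 - Tt x / (2 * \<delta>2)"
        unfolding Tt_def by (simp add: sum_subtractf sum_divide_distrib)
      finally show ?thesis .
    qed
    have "(\<Sum>i = 1..L. \<Sum>m = 0..N. qT i m * Hv i m x \<delta>2 \<Sigma>) = (\<Sum>i = 1..L. \<Sum>m = 0..N.
        qT i m * (- real ?M * ln (\<Sigma> m)) - qT i m * (norm (y i))\<^sup>2 / (2 * \<Sigma> m)
       + qT i m * (- real N / 2 * ln \<delta>2 - T i x / (2 * \<delta>2)))"
      by (intro sum.cong refl pw) auto
    then show ?thesis unfolding G_def
      by (simp only: sum.distrib sum_subtractf A B C)
  qed
  have Gmax: "G x \<delta>2 \<Sigma> \<le> G xs \<delta>s \<Sigma>s" if d: "\<delta>2 > 0" and S: "\<forall>m\<in>{0..N}. \<Sigma> m > 0" for x \<delta>2 \<Sigma>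
  proof -
    have "(\<Sum>m = 0..N. - (real ?M * W m) * ln (\<Sigma> m) - Ys m / (2 * \<Sigma> m))
        \<le> (\<Sum>m = 0..N. - (real ?M * W m) * ln (\<Sigma>s m) - Ys m / (2 * \<Sigma>s m))"
    proof (rule sum_mono)
      fix m assume m: "m \<in> {0..N}"
      have A: "real ?M * W m > 0" using Wpos[OF m] by simp
      have B: "Ys m / 2 > 0" using Yspos[OF m] by simp
      have k: "- (real ?M * W m) * ln (\<Sigma> m) - (Ys m / 2) / \<Sigma> m
          \<le> - (real ?M * W m) * ln ((Ys m / 2) / (real ?M * W m)) - (Ys m / 2) / ((Ys m / 2) / (real ?M * W m))"
        by (rule kl_ineq[OF A B]) (use S m in auto)
      have e: "(Ys m / 2) / (real ?M * W m) = \<Sigma>s m" unfolding \<Sigma>s_eq by simp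
      show "- (real ?M * W m) * ln (\<Sigma> m) - Ys m / (2 * \<Sigma> m)
          \<le> - (real ?M * W m) * ln (\<Sigma>s m) - Ys m / (2 * \<Sigma>s m)"
        using k unfolding e by simp
    qed
    moreover have "- (real L * real N / 2) * ln \<delta>2 - Tt x / (2 * \<delta>2) \<le> - (real L * real N / 2) * ln \<delta>s - Tt xs / (2 * \<delta>s)"
    proof -
      have "Tt x / (2 * \<delta>2) \<ge> Tt xs / (2 * \<delta>2)" using Ttmin[of x] d by (simp add: divide_right_mono)
      moreover have A: "real L * real N / 2 > 0" using L N by simp
      moreover have B: "Tt xs / 2 > 0" using Ttpos by simp
      have k: "- (real L * real N / 2) * ln \<delta>2 - (Tt xs / 2) / \<delta>2
          \<le> - (real L * real N / 2) * ln ((Tt xs / 2) / (real L * real N / 2)) - (Tt xs / 2) / ((Tt xs / 2) / (real L * real N / 2))"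
        by (rule kl_ineq[OF A B d])
      have e: "(Tt xs / 2) / (real L * real N / 2) = \<delta>s" unfolding \<delta>s_eq by simp
      ultimately show ?thesis using k unfolding e by simp
    qed
    ultimately show ?thesis unfolding G_def by linarith
  qed
  have Mmax: "Mobj N L \<sigma> \<mu> y qT q x \<delta>2 \<Sigma> \<le> Mobj N L \<sigma> \<mu> y qT q xs \<delta>s \<Sigma>s"
    if d: "\<delta>2 > 0" and S: "\<forall>m\<in>{0..N}. \<Sigma> m > 0" for x \<delta>2 \<Sigma>
  proof -
    have "Mobj N L \<sigma> \<mu> y qT q x \<delta>2 \<Sigma> - Mobj N L \<sigma> \<mu> y qT q xs \<delta>s \<Sigma>s =
        (\<Sum>i = 1..L. \<Sum>m = 0..N. qT i m * ((\<integral>\<theta>. logjoint N \<sigma> \<mu> (y i) m \<theta> x \<delta>2 \<Sigma> \<partial>Qtheta N (q i))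
           - (\<integral>\<theta>. logjoint N \<sigma> \<mu> (y i) m \<theta> xs \<delta>s \<Sigma>s \<partial>Qtheta N (q i))))"
      unfolding Mobj_def by (simp add: sum_subtractf right_diff_distrib)
    also have "\<dots> = (\<Sum>i = 1..L. \<Sum>m = 0..N. qT i m * (Hv i m x \<delta>2 \<Sigma> - Hv i m xs \<delta>s \<Sigma>s))"
    proof (intro sum.cong refl)
      fix i m assume i: "i \<in> {1..L}" and m: "m \<in> {0..N}"
      have "(\<integral>\<theta>. logjoint N \<sigma> \<mu> (y i) m \<theta> x \<delta>2 \<Sigma> \<partial>Qtheta N (q i))
           - (\<integral>\<theta>. logjoint N \<sigma> \<mu> (y i) m \<theta> xs \<delta>s \<Sigma>s \<partial>Qtheta N (q i)) = Hv i m x \<delta>2 \<Sigma> - Hv i m xs \<delta>s \<Sigma>s"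
        unfolding Hv_def
        by (rule slot2.diff_lemma[OF SL[OF i]]) (use m d S \<delta>s_pos \<Sigma>s_pos fin_joint i in auto)
      then show "qT i m * ((\<integral>\<theta>. logjoint N \<sigma> \<mu> (y i) m \<theta> x \<delta>2 \<Sigma> \<partial>Qtheta N (q i))
           - (\<integral>\<theta>. logjoint N \<sigma> \<mu> (y i) m \<theta> xs \<delta>s \<Sigma>s \<partial>Qtheta N (q i))) = qT i m * (Hv i m x \<delta>2 \<Sigma> - Hv i m xs \<delta>s \<Sigma>s)"
        by simp
    qed
    also have "\<dots> = G x \<delta>2 \<Sigma> - G xs \<delta>s \<Sigma>s"
      unfolding Gsum[symmetric] by (simp add: sum_subtractf right_diff_distrib)
    also have "\<dots> \<le> 0" using Gmax[OF d S] by simp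
    finally show ?thesis by simp
  qed
  have LS: "\<forall>a b :: real. (\<Sum>m = 0..N. (\<Sigma>s m - (b + real m * a))\<^sup>2)
          \<ge> (\<Sum>m = 0..N. (\<Sigma>s m - (sw + real m * sh))\<^sup>2)"
    using lsq[OF N, of \<Sigma>s] unfolding sw_def sh_def \<Sigma>bar_def by blast
  have main: "\<delta>s > 0 \<and> (\<forall>m\<in>{0..N}. \<Sigma>s m > 0) \<and>
       (\<forall>x \<delta>2 \<Sigma>. \<delta>2 > 0 \<longrightarrow> (\<forall>m\<in>{0..N}. \<Sigma> m > 0) \<longrightarrow>
          Mobj N L \<sigma> \<mu> y qT q x \<delta>2 \<Sigma> \<le> Mobj N L \<sigma> \<mu> y qT q xs \<delta>s \<Sigma>s) \<and>
       (\<forall>a b :: real. (\<Sum>m = 0..N. (\<Sigma>s m - (b + real m * a))\<^sup>2)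
          \<ge> (\<Sum>m = 0..N. (\<Sigma>s m - (sw + real m * sh))\<^sup>2))"
    using \<delta>s_pos \<Sigma>s_pos Mmax LS by blast
  show ?thesis unfolding Let_def using main unfolding sw_def sh_def \<Sigma>bar_def \<Sigma>s_def \<delta>s_def xs_def .
qed

end
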